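(* Let $0<\alpha<1$, $T>0$, $\hbar>0$, and for $x\in(0,1]$ and $u\in\mathbb{R}$ let $$\overline f(u,x)=\frac{\sin(\alpha\pi)}{\alpha\pi}\,\frac{x e^{u-T}}{e^{\frac{1}{\alpha}(u-T)}+x}.$$ Then the sum of the discrete Fourier transforms decays at an exponential rate: $$\sum_{n\ne0}\mathfrak{F}[\overline f]\Big(\frac{2n\pi}{\hbar}\Big)=\frac{\mathcal{O}(1)}{e^{\frac{2\pi^2\alpha}{\hbar}}-1},$$ where the constant in the $\mathcal{O}$ term is independent of $n$, $\hbar$, $x$, $\alpha$ and $\sigma$.
   Context: $\mathfrak{F}[w](\xi)=\int_{-\infty}^{+\infty}w(u)e^{-i\xi u}\,\mathrm{d}u$ denotes the Fourier transform in the variable $u$ (here applied to $u\mapsto\overline f(u,x)$ for fixed $x$). In the paper's setting $\sigma>0$ is a clustering parameter with $T=\sigma\alpha\sqrt{N_1}$ and $\hbar=\sigma\alpha/\sqrt{N_1}$ for a positive integer $N_1$. *)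

theory Defs
  imports "HOL-Analysis.Analysis"
begin

definition fbar :: "real \<Rightarrow> real \<Rightarrow> real \<Rightarrow> real \<Rightarrow> real" where
  "fbar \<alpha> T x u =
     sin (\<alpha> * pi) / (\<alpha> * pi) * (x * exp (u - T) / (exp ((u - T) / \<alpha>) + x))"

definition fourier :: "(real \<Rightarrow> real) \<Rightarrow> real \<Rightarrow> complex" where
  "fourier w \<xi> = (LINT u|lborel. complex_of_real (w u) * exp (- \<i> * complex_of_real (\<xi> * u)))"

end

theory Submission imports Defs "HOL-Complex_Analysis.Complex_Analysis" begin


definition Gf :: "complex \<Rightarrow> complex \<Rightarrow> complex" where
  "Gf b w = exp (b * w) / (1 + exp w)"

lemma integrable_exp_half:
  assumes "c > 0"
  shows "integrable lborel (\<lambda>s::real. indicator {0..} s * exp (- c * s))"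
proof (rule integrableI_nonneg)
  show "(\<lambda>s::real. indicator {0..} s * exp (- c * s)) \<in> borel_measurable lborel" by simp
  show "AE x in lborel. 0 \<le> indicator {0..} x * exp (- c * x)" by simp
  have "(\<integral>\<^sup>+x\<in>{0..}. ennreal (exp (- c * x))\<partial>lborel) = ennreal (0 - (- exp (- c * 0) / c))"
  proof (rule nn_integral_FTC_atLeast)
    show "((\<lambda>x. - exp (- c * x) / c) has_real_derivative exp (- c * x)) (at x)" for x
      using assms by (auto intro!: derivative_eq_intros)
    have h: "((\<lambda>x. exp (- c * x)) \<longlongrightarrow> 0) at_top"
      using assms by real_asymp
    have "((\<lambda>x. - exp (- c * x) / c) \<longlongrightarrow> - 0 / c) at_top"
      by (rule tendsto_divide[OF tendsto_minus[OF h] tendsto_const]) (use assms in auto)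
    then show "((\<lambda>x. - exp (- c * x) / c) \<longlongrightarrow> 0) at_top" by simp
  qed auto
  then show "(\<integral>\<^sup>+x. ennreal (indicator {0..} x * exp (- c * x))\<partial>lborel) < \<infinity>"
    by (simp add: mult.commute ennreal_mult' ennreal_indicator)
qed

lemma norm_Gf_real:
  "norm (Gf b (of_real s)) = exp (Re b * s) / (1 + exp s)"
proof -
  have "norm (exp (b * of_real s)) = exp (Re b * s)" by (simp add: norm_exp_eq_Re)
  moreover have "1 + exp (complex_of_real s) = complex_of_real (1 + exp s)"
    by (simp add: exp_of_real)
  moreover have "norm (complex_of_real (1 + exp s)) = 1 + exp s"
    by (metis norm_of_real abs_of_pos add_pos_pos zero_less_one exp_gt_zero)
  ultimately show ?thesis by (simp add: Gf_def norm_divide)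
qed

lemma integrable_Gf:
  assumes "0 < Re b" "Re b < 1"
  shows "integrable lborel (\<lambda>s::real. Gf b (of_real s))"
proof -
  define a where "a = Re b"
  have i1: "integrable lborel (\<lambda>s::real. indicator {0..} s * exp (- (1 - a) * s))"
    using assms by (intro integrable_exp_half) (simp add: a_def)
  have i2': "integrable lborel (\<lambda>s::real. indicator {0..} s * exp (- a * s))"
    using assms by (intro integrable_exp_half) (simp add: a_def)
  have i2: "integrable lborel (\<lambda>s::real. indicator {0..} (0 + (-1) * s) * exp (- a * (0 + (-1) * s)))"
    by (rule lborel_integrable_real_affine[OF i2']) simp
  have ii: "integrable lborel (\<lambda>s::real. indicator {0..} s * exp (- (1 - a) * s)
              + indicator {0..} (0 + (-1) * s) * exp (- a * (0 + (-1) * s)))"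
    using i1 i2 by (rule Bochner_Integration.integrable_add)
  show ?thesis
  proof (rule Bochner_Integration.integrable_bound[OF ii])
    show "(\<lambda>s::real. Gf b (of_real s)) \<in> borel_measurable lborel"
      unfolding Gf_def by measurable
    show "AE x in lborel. norm (Gf b (of_real x)) \<le> norm (indicator {0..} x * exp (- (1 - a) * x)
              + indicator {0..} (0 + (-1) * x) * exp (- a * (0 + (-1) * x)))"
    proof (rule AE_I2)
      fix s :: real
      have pos: "0 < 1 + exp s" by (simp add: add_pos_pos)
      show "norm (Gf b (of_real s)) \<le> norm (indicator {0..} s * exp (- (1 - a) * s)
              + indicator {0..} (0 + (-1) * s) * exp (- a * (0 + (-1) * s)))"
      proof (cases "s \<ge> 0")
        case True
        have "exp (a * s) / (1 + exp s) \<le> exp (a * s) / exp s"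
          using pos by (intro divide_left_mono) auto
        also have "\<dots> = exp (- (1 - a) * s)" by (simp add: exp_diff[symmetric] algebra_simps)
        finally show ?thesis using True by (simp add: norm_Gf_real a_def[symmetric] indicator_def)
      next
        case False
        have "exp (a * s) / (1 + exp s) \<le> exp (a * s) / 1"
          using pos by (intro divide_left_mono) auto
        then show ?thesis using False by (simp add: norm_Gf_real a_def[symmetric] indicator_def)
      qed
    qed
  qed
qed



lemma Gf_shift: "Gf b (w + 2 * pi * \<i>) = exp (2 * pi * \<i> * b) * Gf b w"
proof -
  have "exp (b * (w + 2 * pi * \<i>)) = exp (2 * pi * \<i> * b) * exp (b * w)"
    by (simp add: exp_add[symmetric] algebra_simps)
  moreover have "exp (w + 2 * pi * \<i>) = exp w"
    by (simp add: exp_add)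
  ultimately show ?thesis by (simp add: Gf_def)
qed

lemma Gf_pole:
  assumes "-1 < Im z" "Im z < 2 * pi + 1" "1 + exp z = 0"
  shows "z = \<i> * pi"
proof -
  have "exp (z - \<i> * pi) = 1"
    using assms(3) by (simp add: exp_diff add_eq_0_iff)
  then obtain n :: int where n: "Re z = 0" "Im z - pi = real_of_int (2 * n) * pi"
    by (auto simp: exp_eq_1)
  have "real_of_int (2 * n) * pi < pi + 1" "real_of_int (2 * n) * pi > - 1 - pi"
    using assms(1,2) n(2) by linarith+
  moreover have "pi > 3" using pi_gt3 .
  ultimately have "n = 0"
  proof -
    assume a: "real_of_int (2 * n) * pi < pi + 1" "real_of_int (2 * n) * pi > - 1 - pi" "pi > 3"
    have "n < 1"
    proof (rule ccontr)
      assume "\<not> n < 1"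
      then have "real_of_int (2 * n) \<ge> 2" by simp
      then have "real_of_int (2 * n) * pi \<ge> 2 * pi" using a(3) by (intro mult_right_mono) auto
      then show False using a by linarith
    qed
    moreover have "n > -1"
    proof (rule ccontr)
      assume "\<not> n > -1"
      then have "real_of_int (2 * n) \<le> -2" by simp
      then have "real_of_int (2 * n) * pi \<le> -2 * pi" using a(3) by (intro mult_right_mono) auto
      then show False using a by linarith
    qed
    ultimately show "n = 0" by simp
  qed
  then show ?thesis using n by (simp add: complex_eq_iff)
qed

lemma rect_identity:
  assumes b: "0 < Re b" "Re b < 1" and R: "R > 0"
  shows "(1 - exp (2 * pi * \<i> * b)) * integral {-R..R} (\<lambda>x. Gf b (of_real x))
          + contour_integral (linepath (Complex R 0) (Complex R (2*pi))) (Gf b)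
          + contour_integral (linepath (Complex (-R) (2*pi)) (Complex (-R) 0)) (Gf b)
         = 2 * pi * \<i> * (- exp (b * (\<i> * pi)))"
proof -
  define S where "S = {z. -1 < Im z} \<inter> {z. Im z < 2 * pi + 1}"
  define a1 where "a1 = Complex (-R) 0"
  define a2 where "a2 = Complex R 0"
  define a3 where "a3 = Complex R (2*pi)"
  define a4 where "a4 = Complex (-R) (2*pi)"
  define E2 where "E2 = exp (2 * pi * \<i> * b)"
  have openS: "open S" unfolding S_def
    by (intro open_Int open_halfspace_Im_gt open_halfspace_Im_lt)
  have convS: "convex S" unfolding S_def
    by (intro convex_Int convex_halfspace_Im_gt convex_halfspace_Im_lt)
  have Gf_eq: "Gf b = (\<lambda>w. exp (b * w) / (1 + exp w))"
    by (rule ext) (simp add: Gf_def)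
  have nz: "1 + exp w \<noteq> 0" if "w \<in> S - {\<i> * pi}" for w
    using that Gf_pole[of w] by (auto simp: S_def)
  have holo: "Gf b holomorphic_on S - {\<i> * pi}"
    unfolding Gf_eq using nz by (intro holomorphic_intros) auto
  have cont: "continuous_on (S - {\<i> * pi}) (Gf b)"
    using holo by (rule holomorphic_on_imp_continuous_on)
  have pi_pos: "pi > 0" "0 < 2 * pi + 1" "-1 < 2 * pi" using pi_gt_zero by linarith+
  have seg12: "closed_segment a1 a2 \<subseteq> S - {\<i> * pi}"
    using R pi_pos by (auto simp: pi_pos a1_def a2_def S_def closed_segment_same_Im closed_segment_eq_real_ivl complex_eq_iff)
  have seg23: "closed_segment a2 a3 \<subseteq> S - {\<i> * pi}"
    using R pi_pos by (auto simp: pi_pos a2_def a3_def S_def closed_segment_same_Re closed_segment_eq_real_ivl complex_eq_iff)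
  have seg34: "closed_segment a3 a4 \<subseteq> S - {\<i> * pi}"
    using R pi_pos by (auto simp: pi_pos a3_def a4_def S_def closed_segment_same_Im closed_segment_eq_real_ivl complex_eq_iff)
  have seg43: "closed_segment a4 a3 \<subseteq> S - {\<i> * pi}"
    using seg34 by (simp add: closed_segment_commute)
  have seg41: "closed_segment a4 a1 \<subseteq> S - {\<i> * pi}"
    using R pi_pos by (auto simp: pi_pos a4_def a1_def S_def closed_segment_same_Re closed_segment_eq_real_ivl complex_eq_iff)
  have ci: "(Gf b has_contour_integral contour_integral (linepath p q) (Gf b)) (linepath p q)"
    if "closed_segment p q \<subseteq> S - {\<i> * pi}" for p q
    using that by (intro has_contour_integral_integral contour_integrable_continuous_linepath
        continuous_on_subset[OF cont])
  have rect: "rectpath a1 a3 = linepath a1 a2 +++ linepath a2 a3 +++ linepath a3 a4 +++ linepath a4 a1"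
    by (simp add: rectpath_def Let_def a1_def a2_def a3_def a4_def)
  define P1 where "P1 = contour_integral (linepath a1 a2) (Gf b)"
  define P2 where "P2 = contour_integral (linepath a2 a3) (Gf b)"
  define P3 where "P3 = contour_integral (linepath a3 a4) (Gf b)"
  define P4 where "P4 = contour_integral (linepath a4 a1) (Gf b)"
  have "(Gf b has_contour_integral (P1 + (P2 + (P3 + P4)))) (rectpath a1 a3)"
    unfolding rect P1_def P2_def P3_def P4_def
    by (intro has_contour_integral_join ci seg12 seg23 seg34 seg41 valid_path_join valid_path_linepath)
       auto
  then have sum4: "contour_integral (rectpath a1 a3) (Gf b) = P1 + (P2 + (P3 + P4))"
    by (rule contour_integral_unique)
  have inbox: "\<i> * pi \<in> box a1 a3"
    using R by (auto simp: a1_def a3_def in_box_complex_iff)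
  have wind: "winding_number (rectpath a1 a3) (\<i> * pi) = 1"
    by (rule winding_number_rectpath[OF inbox])
  have cbox_S: "cbox a1 a3 \<subseteq> S"
    by (auto simp: a1_def a3_def S_def in_cbox_complex_iff)
  have pimg: "path_image (rectpath a1 a3) \<subseteq> S - {\<i> * pi}"
  proof -
    have "path_image (rectpath a1 a3) = cbox a1 a3 - box a1 a3"
      using R by (intro path_image_rectpath_cbox_minus_box) (auto simp: a1_def a3_def)
    then show ?thesis using cbox_S inbox by auto
  qed
  have res: "residue (Gf b) (\<i> * pi) = - exp (b * (\<i> * pi))"
  proof -
    have "residue (\<lambda>w. exp (b * w) / (1 + exp w)) (\<i> * pi) = exp (b * (\<i> * pi)) / exp (\<i> * pi)"
    proof (rule residue_simple_pole_deriv[where s = S])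
      show "(\<lambda>w. exp (b * w)) holomorphic_on S" by (intro holomorphic_intros)
      show "(\<lambda>w. 1 + exp w) holomorphic_on S" by (intro holomorphic_intros)
      show "open S" by (rule openS)
      show "connected S" using convS by (rule convex_connected)
      show "\<i> * pi \<in> S" unfolding S_def by simp (use pi_gt_zero in linarith)
      show "((\<lambda>w. 1 + exp w) has_field_derivative exp (\<i> * pi)) (at (\<i> * pi))"
        by (auto intro!: derivative_eq_intros)
      show "exp (b * (\<i> * pi)) \<noteq> 0" by simp
      show "1 + exp (\<i> * pi) = 0" by (simp add: exp_eq_polar)
      show "exp (\<i> * pi) \<noteq> 0" by simp
    qed
    also have "exp (\<i> * pi) = -1" by (simp add: exp_eq_polar)
    finally show ?thesis by (simp add: Gf_eq)
  qed
  have "contour_integral (rectpath a1 a3) (Gf b) =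
          2 * pi * \<i> * (\<Sum>p\<in>{\<i> * pi}. winding_number (rectpath a1 a3) p * residue (Gf b) p)"
  proof (rule Residue_theorem[OF openS _ _ holo])
    show "connected S" using convS by (rule convex_connected)
    show "\<forall>z. z \<notin> S \<longrightarrow> winding_number (rectpath a1 a3) z = 0"
    proof (intro allI impI)
      fix z assume "z \<notin> S"
      then have "z \<notin> cbox a1 a3" using cbox_S by auto
      then show "winding_number (rectpath a1 a3) z = 0"
        using R by (intro winding_number_rectpath_outside) (auto simp: a1_def a3_def)
    qed
  qed (use pimg in auto)
  then have resid: "P1 + (P2 + (P3 + P4)) = 2 * pi * \<i> * (- exp (b * (\<i> * pi)))"
    using sum4 wind res by simp
  have P1_eq: "P1 = integral {-R..R} (\<lambda>x. Gf b (of_real x))"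
    unfolding P1_def using R
    by (subst contour_integral_linepath_Reals_eq) (auto simp: a1_def a2_def complex_is_Real_iff)
  have "P3 = - contour_integral (linepath a4 a3) (Gf b)"
    unfolding P3_def
    by (rule contour_integral_reverse_linepath, rule continuous_on_subset[OF cont seg34])
  also have "linepath a4 a3 = (+) (2 * pi * \<i>) \<circ> linepath a1 a2"
  proof -
    have e1: "a1 + 2 * pi * \<i> = a4" "a2 + 2 * pi * \<i> = a3"
      by (simp_all add: complex_eq_iff a1_def a2_def a3_def a4_def)
    show ?thesis by (metis e1 linepath_translate)
  qed
  also have "contour_integral ((+) (2 * pi * \<i>) \<circ> linepath a1 a2) (Gf b)
              = contour_integral (linepath a1 a2) (\<lambda>x. E2 * Gf b x)"
    by (simp only: contour_integral_translate Gf_shift E2_def)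
  also have "\<dots> = E2 * P1"
    unfolding P1_def
    by (rule contour_integral_lmul, rule contour_integrable_continuous_linepath,
        rule continuous_on_subset[OF cont seg12])
  finally have P3_eq: "P3 = - E2 * P1" by simp
  show ?thesis
    using resid unfolding P3_eq P1_eq[symmetric] E2_def[symmetric]
    by (simp add: P2_def P4_def a2_def a3_def a4_def a1_def algebra_simps)
qed



lemma norm_exp_bw:
  "norm (exp (b * w)) \<le> exp (Re b * Re w + \<bar>Im b\<bar> * \<bar>Im w\<bar>)"
proof -
  have "Re (b * w) = Re b * Re w - Im b * Im w" by simp
  also have "\<dots> \<le> Re b * Re w + \<bar>Im b\<bar> * \<bar>Im w\<bar>"
    using abs_ge_minus_self[of "Im b * Im w"] by (simp add: abs_mult)
  finally show ?thesis by (simp add: norm_exp_eq_Re)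
qed

lemma exp_ne_neg1: "Re w \<noteq> 0 \<Longrightarrow> 1 + exp w \<noteq> 0"
proof
  assume "Re w \<noteq> 0" "1 + exp w = 0"
  then have "exp w = -1" by (simp add: add_eq_0_iff)
  then have "norm (exp w) = 1" by simp
  then have "exp (Re w) = 1" by (simp add: norm_exp_eq_Re)
  then show False using \<open>Re w \<noteq> 0\<close> by simp
qed

lemma side_bound:
  assumes "\<And>w. w \<in> closed_segment p q \<Longrightarrow> norm (Gf b w) \<le> B"
      and "\<And>w. w \<in> closed_segment p q \<Longrightarrow> Re w \<noteq> 0" and "0 \<le> B"
  shows "norm (contour_integral (linepath p q) (Gf b)) \<le> B * norm (q - p)"
proof (rule contour_integral_bound_linepath)
  have "continuous_on (closed_segment p q) (\<lambda>w. exp (b * w) / (1 + exp w))"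
    using assms(2) exp_ne_neg1 by (intro continuous_intros) auto
  then show "Gf b contour_integrable_on linepath p q"
    by (intro contour_integrable_continuous_linepath) (simp add: Gf_def[abs_def])
qed (use assms in auto)

lemma expR_ge2: "(R::real) \<ge> 1 \<Longrightarrow> exp R \<ge> 2"
  using exp_ge_add_one_self[of R] by linarith

lemma norm_vert: "norm (Complex c y - Complex c z) = \<bar>y - z\<bar>"
proof -
  have "Complex c y - Complex c z = complex_of_real (y - z) * \<i>" by (simp add: complex_eq_iff)
  then show ?thesis by (simp add: norm_mult del: of_real_diff)
qed

lemma right_side_bound:
  assumes "R \<ge> 1"
  shows "norm (contour_integral (linepath (Complex R 0) (Complex R (2*pi))) (Gf b))
          \<le> 2 * exp (\<bar>Im b\<bar> * (2*pi)) * exp ((Re b - 1) * R) * (2 * pi)"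
proof -
  have B: "norm (Gf b w) \<le> 2 * exp (\<bar>Im b\<bar> * (2*pi)) * exp ((Re b - 1) * R)"
    if w: "w \<in> closed_segment (Complex R 0) (Complex R (2*pi))" for w
  proof -
    have w': "Re w = R" "0 \<le> Im w" "Im w \<le> 2 * pi"
      using w pi_gt_zero by (auto simp: closed_segment_same_Re closed_segment_eq_real_ivl)
    have "\<bar>Im b\<bar> * \<bar>Im w\<bar> \<le> \<bar>Im b\<bar> * (2*pi)"
      using w' by (intro mult_left_mono) auto
    then have "Re b * Re w + \<bar>Im b\<bar> * \<bar>Im w\<bar> \<le> Re b * R + \<bar>Im b\<bar> * (2*pi)"
      using w' by simp
    then have n1: "norm (exp (b * w)) \<le> exp (Re b * R + \<bar>Im b\<bar> * (2*pi))"
      using norm_exp_bw[of b w] by (meson exp_le_cancel_iff order_trans)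
    have eR: "exp R \<ge> 2" using assms by (rule expR_ge2)
    have "norm (exp w) - 1 \<le> norm (1 + exp w)"
      using norm_diff_ineq[of "exp w" 1] by (simp add: add.commute)
    then have n2: "exp R / 2 \<le> norm (1 + exp w)"
      using w' eR by (simp add: norm_exp_eq_Re)
    have "norm (Gf b w) = norm (exp (b * w)) / norm (1 + exp w)"
      by (simp add: Gf_def norm_divide)
    also have "\<dots> \<le> exp (Re b * R + \<bar>Im b\<bar> * (2*pi)) / (exp R / 2)"
      using n1 n2 by (intro frac_le) auto
    also have "\<dots> = 2 * exp (\<bar>Im b\<bar> * (2*pi)) * exp ((Re b - 1) * R)"
      by (simp add: exp_add[symmetric] exp_diff[symmetric] algebra_simps divide_simps)
    finally show ?thesis .
  qed
  have "norm (contour_integral (linepath (Complex R 0) (Complex R (2*pi))) (Gf b))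
          \<le> 2 * exp (\<bar>Im b\<bar> * (2*pi)) * exp ((Re b - 1) * R) * norm (Complex R (2*pi) - Complex R 0)"
    using assms by (intro side_bound B) (auto simp: closed_segment_same_Re)
  also have "norm (Complex R (2*pi) - Complex R 0) = 2 * pi"
    using pi_gt_zero by (simp add: norm_vert)
  finally show ?thesis .
qed

lemma left_side_bound:
  assumes "R \<ge> 1"
  shows "norm (contour_integral (linepath (Complex (-R) (2*pi)) (Complex (-R) 0)) (Gf b))
          \<le> 2 * exp (\<bar>Im b\<bar> * (2*pi)) * exp (- Re b * R) * (2 * pi)"
proof -
  have B: "norm (Gf b w) \<le> 2 * exp (\<bar>Im b\<bar> * (2*pi)) * exp (- Re b * R)"
    if w: "w \<in> closed_segment (Complex (-R) (2*pi)) (Complex (-R) 0)" for w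
  proof -
    have w': "Re w = -R" "0 \<le> Im w" "Im w \<le> 2 * pi"
      using w pi_gt_zero by (auto simp: closed_segment_same_Re closed_segment_eq_real_ivl)
    have "\<bar>Im b\<bar> * \<bar>Im w\<bar> \<le> \<bar>Im b\<bar> * (2*pi)"
      using w' by (intro mult_left_mono) auto
    then have "Re b * Re w + \<bar>Im b\<bar> * \<bar>Im w\<bar> \<le> - Re b * R + \<bar>Im b\<bar> * (2*pi)"
      using w' by simp
    then have n1: "norm (exp (b * w)) \<le> exp (- Re b * R + \<bar>Im b\<bar> * (2*pi))"
      using norm_exp_bw[of b w] by (meson exp_le_cancel_iff order_trans)
    have eR: "exp (-R) \<le> 1/2"
    proof -
      have "exp (-R) = 1 / exp R" by (simp add: exp_minus field_simps)
      also have "\<dots> \<le> 1/2" using expR_ge2[OF assms] by (simp add: divide_simps)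
      finally show ?thesis .
    qed
    have "1 - norm (exp w) \<le> norm (1 + exp w)"
      using norm_diff_ineq[of 1 "exp w"] by simp
    then have n2: "1 / 2 \<le> norm (1 + exp w)"
      using w' eR by (simp add: norm_exp_eq_Re)
    have "norm (Gf b w) = norm (exp (b * w)) / norm (1 + exp w)"
      by (simp add: Gf_def norm_divide)
    also have "\<dots> \<le> exp (- Re b * R + \<bar>Im b\<bar> * (2*pi)) / (1 / 2)"
      using n1 n2 by (intro frac_le) auto
    also have "\<dots> = 2 * exp (\<bar>Im b\<bar> * (2*pi)) * exp (- Re b * R)"
      by (simp add: exp_add[symmetric] algebra_simps)
    finally show ?thesis .
  qed
  have "norm (contour_integral (linepath (Complex (-R) (2*pi)) (Complex (-R) 0)) (Gf b))
          \<le> 2 * exp (\<bar>Im b\<bar> * (2*pi)) * exp (- Re b * R) * norm (Complex (-R) 0 - Complex (-R) (2*pi))"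
    using assms by (intro side_bound B) (auto simp: closed_segment_same_Re)
  also have "norm (Complex (-R) 0 - Complex (-R) (2*pi)) = 2 * pi"
    using pi_gt_zero by (simp add: norm_vert)
  finally show ?thesis .
qed



lemma J_tendsto:
  assumes "0 < Re b" "Re b < 1"
  shows "(\<lambda>n::nat. integral {-(real n + 1)..real n + 1} (\<lambda>x. Gf b (of_real x)))
           \<longlonglongrightarrow> (LINT s|lborel. Gf b (of_real s))"
proof -
  let ?f = "\<lambda>s::real. Gf b (of_real s)"
  have int: "integrable lborel ?f" using integrable_Gf[OF assms] .
  have eq: "integral {-(real n + 1)..real n + 1} ?f
      = (LINT x|lborel. indicator {-(real n + 1)..real n + 1} x *\<^sub>R ?f x)" for n
  proof -
    have si: "set_integrable lborel {-(real n + 1)..real n + 1} ?f"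
      unfolding set_integrable_def by (intro integrable_mult_indicator int) simp
    show ?thesis using set_borel_integral_eq_integral(2)[OF si]
      by (simp add: set_lebesgue_integral_def)
  qed
  have "(\<lambda>n::nat. LINT x|lborel. indicator {-(real n + 1)..real n + 1} x *\<^sub>R ?f x)
          \<longlonglongrightarrow> (LINT s|lborel. ?f s)"
  proof (rule integral_dominated_convergence[where w = "\<lambda>x. norm (?f x)"])
    show "?f \<in> borel_measurable lborel" using int by (rule borel_measurable_integrable)
    show "(\<lambda>x. indicator {-(real n + 1)..real n + 1} x *\<^sub>R ?f x) \<in> borel_measurable lborel" for n
      using int by (intro borel_measurable_integrable integrable_mult_indicator) auto
    show "integrable lborel (\<lambda>x. norm (?f x))" using int by (rule integrable_norm)
    show "AE x in lborel. (\<lambda>n. indicator {-(real n + 1)..real n + 1} x *\<^sub>R ?f x) \<longlonglongrightarrow> ?f x"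
    proof (rule AE_I2)
      fix x :: real
      have "eventually (\<lambda>n::nat. indicator {-(real n + 1)..real n + 1} x *\<^sub>R ?f x = ?f x) sequentially"
      proof (rule eventually_sequentiallyI[where c = "nat \<lceil>\<bar>x\<bar>\<rceil>"])
        fix n :: nat assume "nat \<lceil>\<bar>x\<bar>\<rceil> \<le> n"
        then have "\<bar>x\<bar> \<le> real n" by linarith
        then have "x \<in> {-(real n + 1)..real n + 1}" by auto
        then show "indicator {-(real n + 1)..real n + 1} x *\<^sub>R ?f x = ?f x"
          by (simp add: indicator_def)
      qed
      then show "(\<lambda>n. indicator {-(real n + 1)..real n + 1} x *\<^sub>R ?f x) \<longlonglongrightarrow> ?f x"
        by (rule tendsto_eventually)
    qed
    show "AE x in lborel. norm (indicator {-(real n + 1)..real n + 1} x *\<^sub>R ?f x) \<le> norm (?f x)" for n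
      by (intro AE_I2) (simp add: indicator_def)
  qed
  then show ?thesis by (simp only: eq)
qed

lemma exp_lin_tendsto:
  assumes "(c::real) < 0"
  shows "(\<lambda>n::nat. exp (c * (real n + 1))) \<longlonglongrightarrow> 0"
proof -
  have e: "exp (c * (real n + 1)) = exp c * exp c ^ n" for n
    by (simp add: exp_add[symmetric] exp_of_nat_mult[symmetric] algebra_simps)
  have "(\<lambda>n::nat. exp c * exp c ^ n) \<longlonglongrightarrow> exp c * 0"
    using assms by (intro tendsto_intros LIMSEQ_power_zero) auto
  then show ?thesis by (simp add: e)
qed

lemma main_identity:
  assumes b: "0 < Re b" "Re b < 1"
  shows "(1 - exp (2 * pi * \<i> * b)) * (LINT s|lborel. Gf b (of_real s)) = 2 * pi * \<i> * (- exp (b * (\<i> * pi)))"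
proof -
  define E2 where "E2 = exp (2 * pi * \<i> * b)"
  define L where "L = 2 * pi * \<i> * (- exp (b * (\<i> * pi)))"
  define J where "J n = integral {-(real n + 1)..real n + 1} (\<lambda>x. Gf b (of_real x))" for n :: nat
  define K where "K = 2 * exp (\<bar>Im b\<bar> * (2*pi)) * (2 * pi)"
  have lim1: "(\<lambda>n. (1 - E2) * J n) \<longlonglongrightarrow> (1 - E2) * (LINT s|lborel. Gf b (of_real s))"
    unfolding J_def by (intro tendsto_intros J_tendsto b)
  have bound: "norm ((1 - E2) * J n - L) \<le> K * exp ((Re b - 1) * (real n + 1)) + K * exp (- Re b * (real n + 1))" for n
  proof -
    define R where "R = real n + 1"
    have R: "R > 0" "R \<ge> 1" by (simp_all add: R_def)
    define A where "A = contour_integral (linepath (Complex R 0) (Complex R (2*pi))) (Gf b)"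
    define B where "B = contour_integral (linepath (Complex (-R) (2*pi)) (Complex (-R) 0)) (Gf b)"
    have h: "(1 - E2) * J n + A + B = L"
      using rect_identity[OF b R(1)] unfolding J_def E2_def L_def R_def[symmetric] A_def B_def .
    have "(1 - E2) * J n - L = (1 - E2) * J n - ((1 - E2) * J n + A + B)" by (simp only: h)
    also have "\<dots> = - (A + B)" by (simp add: algebra_simps)
    finally have "norm ((1 - E2) * J n - L) = norm (A + B)" by (simp only: norm_minus_cancel)
    also have "\<dots> \<le> norm A + norm B" by (rule norm_triangle_ineq)
    also have "\<dots> \<le> K * exp ((Re b - 1) * R) + K * exp (- Re b * R)"
    proof (rule add_mono)
      have e1: "K * exp ((Re b - 1) * R) = 2 * exp (\<bar>Im b\<bar> * (2*pi)) * exp ((Re b - 1) * R) * (2 * pi)"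
        unfolding K_def by (simp only: mult.assoc mult.commute[of "exp ((Re b - 1) * R)"])
      show "norm A \<le> K * exp ((Re b - 1) * R)"
        unfolding e1 A_def by (rule right_side_bound[OF R(2)])
      have e2: "K * exp (- Re b * R) = 2 * exp (\<bar>Im b\<bar> * (2*pi)) * exp (- Re b * R) * (2 * pi)"
        unfolding K_def by (simp only: mult.assoc mult.commute[of "exp (- Re b * R)"])
      show "norm B \<le> K * exp (- Re b * R)"
        unfolding e2 B_def by (rule left_side_bound[OF R(2)])
    qed
    finally have "norm ((1 - E2) * J n - L) \<le> K * exp ((Re b - 1) * R) + K * exp (- Re b * R)" .
    then show ?thesis by (simp only: R_def)
  qed
  have z1: "(\<lambda>n::nat. exp ((Re b - 1) * (real n + 1))) \<longlonglongrightarrow> 0"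
    using b by (intro exp_lin_tendsto) auto
  have z2: "(\<lambda>n::nat. exp (- Re b * (real n + 1))) \<longlonglongrightarrow> 0"
    using b by (intro exp_lin_tendsto) auto
  have "(\<lambda>n. K * exp ((Re b - 1) * (real n + 1)) + K * exp (- Re b * (real n + 1))) \<longlonglongrightarrow> K * 0 + K * 0"
    by (intro tendsto_intros z1 z2)
  then have g0: "(\<lambda>n. K * exp ((Re b - 1) * (real n + 1)) + K * exp (- Re b * (real n + 1))) \<longlonglongrightarrow> 0"
    by simp
  have "(\<lambda>n. (1 - E2) * J n - L) \<longlonglongrightarrow> 0"
    by (rule Lim_null_comparison[OF always_eventually g0]) (use bound in blast)
  then have lim2: "(\<lambda>n. (1 - E2) * J n) \<longlonglongrightarrow> L"
    by (rule LIM_zero_cancel)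
  from LIMSEQ_unique[OF lim1 lim2] show ?thesis by (simp add: E2_def L_def)
qed



lemma fbar_affine:
  assumes "0 < \<alpha>" "0 < x"
  shows "fbar \<alpha> T x (T + \<alpha> * ln x + \<alpha> * s)
         = sin (\<alpha> * pi) / (\<alpha> * pi) * exp (\<alpha> * ln x) * (exp (\<alpha> * s) / (1 + exp s))"
proof -
  have e1: "exp (T + \<alpha> * ln x + \<alpha> * s - T) = exp (\<alpha> * ln x) * exp (\<alpha> * s)"
    by (simp add: exp_add[symmetric])
  have e2: "exp ((T + \<alpha> * ln x + \<alpha> * s - T) / \<alpha>) = x * exp s"
  proof -
    have "(T + \<alpha> * ln x + \<alpha> * s - T) / \<alpha> = ln x + s" using assms by (simp add: field_simps)
    then show ?thesis using assms by (simp add: exp_add)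
  qed
  have pos: "0 < 1 + exp s" by (simp add: add_pos_pos)
  have d: "x * exp s + x = x * (1 + exp s)" by (simp add: algebra_simps)
  have "x * (exp (\<alpha> * ln x) * exp (\<alpha> * s)) / (x * exp s + x)
        = exp (\<alpha> * ln x) * exp (\<alpha> * s) / (1 + exp s)"
    unfolding d using assms by simp
  then show ?thesis unfolding fbar_def e1 e2 by simp
qed

lemma Gf_split:
  "Gf (complex_of_real \<alpha> - \<i> * complex_of_real (\<alpha> * \<xi>)) (complex_of_real s)
     = complex_of_real (exp (\<alpha> * s) / (1 + exp s)) * exp (- \<i> * complex_of_real (\<alpha> * \<xi> * s))"
proof -
  have "(complex_of_real \<alpha> - \<i> * complex_of_real (\<alpha> * \<xi>)) * complex_of_real s
        = complex_of_real (\<alpha> * s) + (- \<i> * complex_of_real (\<alpha> * \<xi> * s))"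
    by (simp add: algebra_simps)
  then have "exp ((complex_of_real \<alpha> - \<i> * complex_of_real (\<alpha> * \<xi>)) * complex_of_real s)
       = complex_of_real (exp (\<alpha> * s)) * exp (- \<i> * complex_of_real (\<alpha> * \<xi> * s))"
    by (simp only: exp_add exp_of_real)
  moreover have "1 + exp (complex_of_real s) = complex_of_real (1 + exp s)"
    by (simp add: exp_of_real)
  ultimately show ?thesis by (simp add: Gf_def)
qed

lemma fourier_formula:
  fixes \<alpha> x T \<xi> :: real
  assumes "0 < \<alpha>" "0 < x"
  defines "b \<equiv> complex_of_real \<alpha> - \<i> * complex_of_real (\<alpha> * \<xi>)"
  shows "fourier (fbar \<alpha> T x) \<xi> = complex_of_real \<alpha> *
           (complex_of_real (sin (\<alpha> * pi) / (\<alpha> * pi) * exp (\<alpha> * ln x))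
             * exp (- \<i> * complex_of_real (\<xi> * (T + \<alpha> * ln x)))
             * (LINT s|lborel. Gf b (of_real s)))"
proof -
  define t0 where "t0 = T + \<alpha> * ln x"
  define C0 where "C0 = complex_of_real (sin (\<alpha> * pi) / (\<alpha> * pi) * exp (\<alpha> * ln x))
             * exp (- \<i> * complex_of_real (\<xi> * t0))"
  have pw: "complex_of_real (fbar \<alpha> T x (t0 + \<alpha> * s)) * exp (- \<i> * complex_of_real (\<xi> * (t0 + \<alpha> * s)))
            = C0 * Gf b (of_real s)" for s
  proof -
    have "exp (- \<i> * complex_of_real (\<xi> * (t0 + \<alpha> * s)))
          = exp (- \<i> * complex_of_real (\<xi> * t0)) * exp (- \<i> * complex_of_real (\<alpha> * \<xi> * s))"
      by (simp add: exp_add[symmetric] algebra_simps)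
    then show ?thesis
      unfolding b_def Gf_split C0_def t0_def fbar_affine[OF assms(1,2)]
      by (simp add: mult_ac)
  qed
  have "fourier (fbar \<alpha> T x) \<xi>
        = \<bar>\<alpha>\<bar> *\<^sub>R (LINT s|lborel. complex_of_real (fbar \<alpha> T x (t0 + \<alpha> * s))
              * exp (- \<i> * complex_of_real (\<xi> * (t0 + \<alpha> * s))))"
    unfolding fourier_def using assms(1)
    by (subst lborel_integral_real_affine[where c = \<alpha> and t = t0]) auto
  also have "\<dots> = \<bar>\<alpha>\<bar> *\<^sub>R (LINT s|lborel. C0 * Gf b (of_real s))"
    by (simp only: pw)
  also have "\<dots> = complex_of_real \<alpha> * (C0 * (LINT s|lborel. Gf b (of_real s)))"
    using assms(1) by (simp add: scaleR_conv_of_real)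
  finally show ?thesis by (simp add: C0_def t0_def)
qed



lemma fourier_bound:
  fixes \<alpha> x T \<xi> :: real
  assumes a: "0 < \<alpha>" "\<alpha> < 1" and x: "0 < x" "x \<le> 1"
  shows "norm (fourier (fbar \<alpha> T x) \<xi>) \<le> 2 * exp (- (pi * \<alpha> * \<bar>\<xi>\<bar>))"
proof -
  define b where "b = complex_of_real \<alpha> - \<i> * complex_of_real (\<alpha> * \<xi>)"
  define I where "I = (LINT s|lborel. Gf b (of_real s))"
  define E where "E = exp (b * (\<i> * pi))"
  define y where "y = pi * \<alpha> * \<xi>"
  define X where "X = exp (\<alpha> * ln x)"
  define sn where "sn = sin (\<alpha> * pi)"
  have Reb: "Re b = \<alpha>" by (simp add: b_def)
  have sn_pos: "sn > 0" unfolding sn_def using a by (intro sin_gt_zero) auto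
  have X: "0 < X" "X \<le> 1" unfolding X_def using a x by (auto simp: mult_nonneg_nonpos ln_le_zero_iff)
  have F: "fourier (fbar \<alpha> T x) \<xi> = complex_of_real \<alpha> *
           (complex_of_real (sn / (\<alpha> * pi) * X)
             * exp (- \<i> * complex_of_real (\<xi> * (T + \<alpha> * ln x))) * I)"
    unfolding I_def b_def sn_def X_def by (rule fourier_formula[OF a(1) x(1)])
  have nF: "norm (fourier (fbar \<alpha> T x) \<xi>) = sn / pi * X * norm I"
  proof -
    have u: "norm (exp (- \<i> * complex_of_real (\<xi> * (T + \<alpha> * ln x)))) = 1"
      by (simp only: norm_exp_eq_Re) simp
    have "norm (fourier (fbar \<alpha> T x) \<xi>) = \<bar>\<alpha>\<bar> * (\<bar>sn / (\<alpha> * pi) * X\<bar> * 1 * norm I)"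
      unfolding F by (simp only: norm_mult u norm_of_real)
    also have "\<dots> = sn / pi * X * norm I"
      using a sn_pos X pi_gt_zero by (simp add: abs_of_pos field_simps)
    finally show ?thesis .
  qed
  have mi: "(1 - exp (2 * pi * \<i> * b)) * I = 2 * pi * \<i> * (- E)"
    unfolding I_def E_def using a by (intro main_identity) (auto simp: Reb)
  have EE: "exp (2 * pi * \<i> * b) = E * E"
    unfolding E_def by (simp add: exp_add[symmetric] algebra_simps)
  have Enz: "E \<noteq> 0" by (simp add: E_def)
  have key: "(E - inverse E) * I = 2 * pi * \<i>"
  proof -
    have "(E - inverse E) * I = - inverse E * ((1 - E * E) * I)"
      using Enz by (simp add: field_simps)
    also have "\<dots> = 2 * pi * \<i>" using mi Enz unfolding EE by (simp add: field_simps)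
    finally show ?thesis .
  qed
  have nkey: "norm (E - inverse E) * norm I = 2 * pi"
    using arg_cong[OF key, of norm] by (simp add: norm_mult)
  have ImE: "Im (E - inverse E) = sn * (exp y + exp (- y))"
  proof -
    have "inverse E = exp (- (b * (\<i> * pi)))" by (simp add: E_def exp_minus)
    moreover have "Re (b * (\<i> * pi)) = y" "Im (b * (\<i> * pi)) = \<alpha> * pi"
      by (simp_all add: b_def y_def)
    ultimately show ?thesis
      by (simp add: E_def Im_exp sn_def algebra_simps)
  qed
  have lb: "sn * (exp y + exp (- y)) \<le> norm (E - inverse E)"
    using abs_Im_le_cmod[of "E - inverse E"] ImE by simp
  have ey: "exp \<bar>y\<bar> \<le> exp y + exp (- y)"
    by (cases "y \<ge> 0") auto
  have pos: "0 < sn * (exp y + exp (- y))" using sn_pos by (simp add: add_pos_pos)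
  have "norm (fourier (fbar \<alpha> T x) \<xi>) = sn / pi * X * (2 * pi / norm (E - inverse E))"
  proof -
    have Npos: "norm (E - inverse E) > 0" using pos lb by linarith
    have "norm I = 2 * pi / norm (E - inverse E)"
      using nkey Npos by (simp add: eq_divide_eq mult.commute)
    then show ?thesis unfolding nF by simp
  qed
  also have "\<dots> = 2 * sn * X / norm (E - inverse E)"
    using pi_gt_zero by (simp add: field_simps)
  also have "\<dots> \<le> 2 * sn * X / (sn * (exp y + exp (- y)))"
    using lb pos sn_pos X by (intro divide_left_mono mult_pos_pos) (auto intro: add_pos_pos)
  also have "\<dots> = 2 * X / (exp y + exp (- y))"
    using sn_pos by simp
  also have "\<dots> \<le> 2 * 1 / exp \<bar>y\<bar>"
    using X ey by (intro frac_le) auto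
  also have "\<dots> = 2 * exp (- \<bar>y\<bar>)" by (simp add: exp_minus field_simps)
  also have "\<bar>y\<bar> = pi * \<alpha> * \<bar>\<xi>\<bar>" using a by (simp add: y_def abs_mult)
  finally show ?thesis .
qed



lemma geom_has_sum_int:
  fixes q :: real
  assumes q: "0 < q" "q < 1"
  shows "((\<lambda>n::int. 2 * q ^ nat \<bar>n\<bar>) has_sum (4 * q / (1 - q))) (UNIV - {0})"
proof -
  let ?g = "\<lambda>n::int. 2 * q ^ nat \<bar>n\<bar>"
  define h1 where "h1 = (\<lambda>k::nat. int k + 1)"
  define h2 where "h2 = (\<lambda>k::nat. - (int k + 1))"
  have gs: "(\<lambda>k::nat. 2 * q * q ^ k) sums (2 * q * (1 / (1 - q)))"
    using q by (intro sums_mult geometric_sums) auto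
  have hs: "((\<lambda>k::nat. 2 * q * q ^ k) has_sum (2 * q / (1 - q))) UNIV"
    using sums_nonneg_imp_has_sum[OF gs] q by simp
  have c1: "?g \<circ> h1 = (\<lambda>k::nat. 2 * q * q ^ k)"
    by (rule ext) (simp add: h1_def nat_add_distrib)
  have c2: "?g \<circ> h2 = (\<lambda>k::nat. 2 * q * q ^ k)"
    by (rule ext) (simp add: h2_def nat_add_distrib)
  have i1: "inj h1" by (simp add: h1_def inj_def)
  have i2: "inj h2" by (simp add: h2_def inj_def)
  have s1: "(?g has_sum (2 * q / (1 - q))) (range h1)"
    using hs by (subst has_sum_reindex[OF inj_on_subset[OF i1]]) (auto simp: c1)
  have s2: "(?g has_sum (2 * q / (1 - q))) (range h2)"
    using hs by (subst has_sum_reindex[OF inj_on_subset[OF i2]]) (auto simp: c2)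
  have disj: "range h1 \<inter> range h2 = {}" by (auto simp: h1_def h2_def)
  have un: "range h1 \<union> range h2 = UNIV - {0}"
  proof (intro equalityI subsetI)
    fix n :: int assume "n \<in> UNIV - {0}"
    then have "n > 0 \<or> n < 0" by auto
    then show "n \<in> range h1 \<union> range h2"
    proof
      assume "n > 0"
      then have "n = h1 (nat (n - 1))" by (simp add: h1_def)
      then show ?thesis by blast
    next
      assume "n < 0"
      then have "n = h2 (nat (- n - 1))" by (simp add: h2_def)
      then show ?thesis by blast
    qed
  qed (auto simp: h1_def h2_def)
  have "(?g has_sum (2 * q / (1 - q) + 2 * q / (1 - q))) (range h1 \<union> range h2)"
    by (rule has_sum_Un_disjoint[OF s1 s2 disj])
  then show ?thesis unfolding un by (simp add: field_simps)
qed

theorem theorem3p2: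
  shows "\<exists>C::real. \<forall>\<alpha> T h x::real.
           0 < \<alpha> \<and> \<alpha> < 1 \<and> 0 < T \<and> 0 < h \<and> 0 < x \<and> x \<le> 1 \<longrightarrow>
           (\<lambda>n::int. fourier (fbar \<alpha> T x) (2 * real_of_int n * pi / h)) summable_on (UNIV - {0})
           \<and> norm (\<Sum>\<^sub>\<infinity>n\<in>UNIV - {0::int}. fourier (fbar \<alpha> T x) (2 * real_of_int n * pi / h))
               \<le> C / (exp (2 * pi\<^sup>2 * \<alpha> / h) - 1)"
proof (intro exI[of _ 4] allI impI)
  fix \<alpha> T h x :: real
  assume H: "0 < \<alpha> \<and> \<alpha> < 1 \<and> 0 < T \<and> 0 < h \<and> 0 < x \<and> x \<le> 1"
  then have a: "0 < \<alpha>" "\<alpha> < 1" and hp: "0 < h" and x: "0 < x" "x \<le> 1" by auto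
  define A where "A = 2 * pi\<^sup>2 * \<alpha> / h"
  define q where "q = exp (- A)"
  have Apos: "A > 0" unfolding A_def using a hp by (simp add: pi_gt_zero)
  have q: "0 < q" "q < 1" unfolding q_def using Apos by auto
  let ?F = "\<lambda>n::int. fourier (fbar \<alpha> T x) (2 * real_of_int n * pi / h)"
  let ?g = "\<lambda>n::int. 2 * q ^ nat \<bar>n\<bar>"
  have gs: "(?g has_sum (4 * q / (1 - q))) (UNIV - {0})" by (rule geom_has_sum_int[OF q])
  have bnd: "norm (?F n) \<le> ?g n" for n
  proof -
    have "norm (?F n) \<le> 2 * exp (- (pi * \<alpha> * \<bar>2 * real_of_int n * pi / h\<bar>))"
      by (rule fourier_bound[OF a x])
    also have "pi * \<alpha> * \<bar>2 * real_of_int n * pi / h\<bar> = real (nat \<bar>n\<bar>) * A"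
      using a hp pi_gt_zero by (simp add: A_def abs_mult abs_divide power2_eq_square field_simps)
    also have "exp (- (real (nat \<bar>n\<bar>) * A)) = q ^ nat \<bar>n\<bar>"
      by (simp add: q_def exp_of_nat_mult[symmetric])
    finally show ?thesis .
  qed
  have gabs: "(\<lambda>n. norm (?g n)) summable_on (UNIV - {0})"
  proof -
    have "?g summable_on (UNIV - {0})" using gs by (rule has_sum_imp_summable)
    moreover have "norm (?g n) = ?g n" for n using q by simp
    ultimately show ?thesis by simp
  qed
  have Fabs: "(\<lambda>n. norm (?F n)) summable_on (UNIV - {0})"
    by (rule Infinite_Sum.abs_summable_on_comparison_test[OF gabs]) (use bnd q in simp)
  have Fs: "?F summable_on (UNIV - {0})" by (rule Infinite_Sum.abs_summable_summable[OF Fabs])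
  have "norm (\<Sum>\<^sub>\<infinity>n\<in>UNIV - {0::int}. ?F n) \<le> 4 * q / (1 - q)"
    by (rule norm_infsum_le[OF has_sum_infsum[OF Fs] gs]) (use bnd in blast)
  also have "4 * q / (1 - q) = 4 / (exp A - 1)"
  proof -
    have qe: "q = 1 / exp A" by (simp add: q_def exp_minus field_simps)
    have e1: "exp A > 1" using Apos by simp
    have "1 - 1 / exp A = (exp A - 1) / exp A" using e1 by (simp add: field_simps)
    then show ?thesis unfolding qe using e1 by simp
  qed
  finally show "?F summable_on (UNIV - {0}) \<and>
       norm (\<Sum>\<^sub>\<infinity>n\<in>UNIV - {0::int}. ?F n) \<le> 4 / (exp (2 * pi\<^sup>2 * \<alpha> / h) - 1)"
    using Fs by (simp add: A_def)
qed

end
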